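(* Let $\Gamma$ be a graph on $n$ vertices with at least $cn^2$ edges, where $c>0$. Then there exists a set $X$ of vertices with $|X|\ge 2^{-5}cn$ such that for any two vertices $x,y\in X$ there are at least $2^{-35}c^9n^5$ paths of length $6$ between $x$ and $y$.
   Context: A path of length 6 between $x$ and $y$ is a sequence of vertices $x=v_0,v_1,\dots,v_6=y$ in which each consecutive pair $v_{i-1}v_i$ is an edge (vertices need not be distinct); the count is of such sequences. *)

theory Defs
  imports Main Complex_Main
begin

definition graph :: "'a set \<Rightarrow> ('a \<Rightarrow> 'a \<Rightarrow> bool) \<Rightarrow> bool" where
  "graph V E \<longleftrightarrow> finite V \<and> (\<forall>x y. E x y \<longrightarrow> x \<in> V \<and> y \<in> V)
     \<and> (\<forall>x y. E x y \<longrightarrow> E y x) \<and> (\<forall>x. \<not> E x x)"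

definition edges :: "'a set \<Rightarrow> ('a \<Rightarrow> 'a \<Rightarrow> bool) \<Rightarrow> 'a set set" where
  "edges V E = {{x, y} | x y. x \<in> V \<and> y \<in> V \<and> E x y}"

text \<open>Paths (walks) of length k from x to y: sequences x = v0, ..., vk = y
  with consecutive vertices adjacent, represented as lists of length k+1.\<close>
definition walks :: "'a set \<Rightarrow> ('a \<Rightarrow> 'a \<Rightarrow> bool) \<Rightarrow> nat \<Rightarrow> 'a \<Rightarrow> 'a \<Rightarrow> 'a list set" where
  "walks V E k x y = {vs. length vs = Suc k \<and> set vs \<subseteq> V \<and> vs ! 0 = x \<and> vs ! k = y
      \<and> (\<forall>i<k. E (vs ! i) (vs ! Suc i))}"

end

theory Submission
  imports Defs
begin
lemma card_filter_sum: "finite A \<Longrightarrow> real (card {x\<in>A. P x}) = (\<Sum>x\<in>A. if P x then 1 else 0)"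
  by (simp add: sum.inter_filter[symmetric])

lemma walk7:
  assumes "x \<in> V" "y \<in> V" "a \<in> V" "z \<in> V" "b \<in> V" "w \<in> V" "c \<in> V"
   "E x a" "E a z" "E z b" "E b w" "E w c" "E c y"
  shows "[x,a,z,b,w,c,y] \<in> walks V E 6 x y"
proof -
  have "\<forall>i<6. E ([x,a,z,b,w,c,y] ! i) ([x,a,z,b,w,c,y] ! Suc i)"
  proof (intro allI impI)
    fix i :: nat assume "i < 6"
    then have "i = 0 \<or> i = 1 \<or> i = 2 \<or> i = 3 \<or> i = 4 \<or> i = 5" by linarith
    then show "E ([x,a,z,b,w,c,y] ! i) ([x,a,z,b,w,c,y] ! Suc i)"
      using assms by (auto simp: numeral_eq_Suc)
  qed
  then show ?thesis using assms unfolding walks_def by (auto simp: numeral_eq_Suc)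
qed


lemma card_filter_not: "finite A \<Longrightarrow> real (card {x\<in>A. \<not> P x}) = real (card A) - (\<Sum>x\<in>A. if P x then 1 else 0)"
proof -
  assume f: "finite A"
  have "(\<Sum>x\<in>A. (if \<not> P x then 1 else 0) + (if P x then 1 else 0)) = (\<Sum>x\<in>A. (1::real))"
    by (intro sum.cong) auto
  then show ?thesis using card_filter_sum[OF f, of "\<lambda>x. \<not> P x"] by (simp add: sum.distrib)
qed

lemma cube_le: "0 \<le> (m::real) \<Longrightarrow> m \<le> a \<Longrightarrow> m \<le> b \<Longrightarrow> m \<le> c \<Longrightarrow> m^3 \<le> a * b * c"
proof -
  assume h: "0 \<le> m" "m \<le> a" "m \<le> b" "m \<le> c"
  have "m * m \<le> a * b" using h by (intro mult_mono) auto
  moreover have "0 \<le> a * b" using h by simp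
  ultimately have "m * m * m \<le> a * b * c" using h by (intro mult_mono) auto
  then show ?thesis by (simp add: power3_eq_cube)
qed

theorem lemma2p2:
  fixes V :: "'a set" and E :: "'a \<Rightarrow> 'a \<Rightarrow> bool" and c :: real
  assumes "graph V E"
    and "c > 0"
    and "real (card (edges V E)) \<ge> c * real (card V) ^ 2"
  shows "\<exists>X \<subseteq> V. real (card X) \<ge> 2 powr (-5) * c * real (card V)
           \<and> (\<forall>x\<in>X. \<forall>y\<in>X. real (card (walks V E 6 x y))
                 \<ge> 2 powr (-35) * c ^ 9 * real (card V) ^ 5)"
proof -
  define n where "n = real (card V)"
  have fin: "finite V" and sym: "\<And>x y. E x y \<Longrightarrow> E y x"
    and inV: "\<And>x y. E x y \<Longrightarrow> x \<in> V \<and> y \<in> V"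
    using assms(1) unfolding graph_def by auto
  show ?thesis
  proof (cases "card V = 0")
    case True
    then show ?thesis by (intro exI[of _ "{}"]) auto
  next
    case False
    then have npos: "n > 0" unfolding n_def by simp
    define N where "N v = {u\<in>V. E v u}" for v
    have finN: "finite (N v)" for v unfolding N_def using fin by simp
    have NV: "N v \<subseteq> V" for v unfolding N_def by auto
    define m where "m = c^2 * n / 16"
    have m0: "m \<ge> 0" unfolding m_def using npos by simp
    define B where "B x y = (real (card (N x \<inter> N y)) < m)" for x y
    define bx where "bx v x = (\<Sum>y\<in>N v. if B x y then 1 else 0 :: real)" for v x
    define b where "b v = (\<Sum>x\<in>N v. bx v x)" for v
    define d where "d v = real (card (N v))" for v
    have edg: "edges V E \<subseteq> (\<lambda>p. {fst p, snd p}) ` (SIGMA x:V. N x)"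
    proof
      fix e assume "e \<in> edges V E"
      then obtain x y where "e = {x,y}" "x \<in> V" "y \<in> V" "E x y" unfolding edges_def by blast
      then show "e \<in> (\<lambda>p. {fst p, snd p}) ` (SIGMA x:V. N x)"
        by (intro image_eqI[where x="(x,y)"]) (auto simp: N_def)
    qed
    have finS: "finite (SIGMA x:V. N x)" using fin finN by auto
    have "card (edges V E) \<le> card (SIGMA x:V. N x)"
      using card_mono[OF finite_imageI[OF finS] edg] card_image_le[OF finS, of "\<lambda>p. {fst p, snd p}"] by linarith
    also have "card (SIGMA x:V. N x) = (\<Sum>x\<in>V. card (N x))"
      using fin finN by simp
    finally have "card (edges V E) \<le> (\<Sum>x\<in>V. card (N x))" .
    then have "real (card (edges V E)) \<le> (\<Sum>v\<in>V. d v)" unfolding d_def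
      by (metis of_nat_le_iff of_nat_sum)
    then have s1: "c * n^2 \<le> (\<Sum>v\<in>V. d v)"
      using assms(3) unfolding n_def by linarith
    have "card (SIGMA x:V. N x) \<le> card (V \<times> V)"
      by (rule card_mono) (use fin NV in auto)
    then have "card (edges V E) \<le> card V * card V"
      using \<open>card (edges V E) \<le> card (SIGMA x:V. N x)\<close> by (simp add: card_cartesian_product)
    then have "c * n^2 \<le> n^2" using assms(3) unfolding n_def power2_eq_square
      by (metis of_nat_le_iff of_nat_mult order.trans)
    then have c1: "c \<le> 1" using npos by (simp add: power2_eq_square)
    have "d v ^ 2 \<ge> 2 * (c*n) * d v - (c*n)^2" for v
      using sum_squares_ge_zero[of "d v - c*n" 0] by (simp add: power2_eq_square algebra_simps)
    then have A: "(\<Sum>v\<in>V. 2 * (c*n) * d v - (c*n)^2) \<le> (\<Sum>v\<in>V. d v ^ 2)"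
      by (intro sum_mono) auto
    have B: "(\<Sum>v\<in>V. 2 * (c*n) * d v - (c*n)^2) = 2 * (c*n) * (\<Sum>v\<in>V. d v) - n * (c*n)^2"
      by (simp add: sum_subtractf sum_distrib_left n_def)
    have C: "2 * (c*n) * (c * n^2) \<le> 2 * (c*n) * (\<Sum>v\<in>V. d v)"
      using s1 assms(2) npos by (intro mult_left_mono) auto
    have D: "2 * (c*n) * (c * n^2) - n * (c*n)^2 = c^2 * n^3"
      by (simp add: power2_eq_square power3_eq_cube algebra_simps)
    have s2: "(\<Sum>v\<in>V. d v ^ 2) \<ge> c^2 * n^3" using A B C D by linarith
    have bexp: "b v = (\<Sum>x\<in>V. \<Sum>y\<in>V. if E v x \<and> E v y \<and> B x y then 1 else 0)" if "v \<in> V" for v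
    proof -
      have "b v = (\<Sum>x\<in>V. if E v x then (\<Sum>y\<in>V. if E v y then (if B x y then 1 else 0) else 0) else 0)"
        unfolding b_def bx_def N_def using fin by (simp add: sum.inter_filter)
      also have "\<dots> = (\<Sum>x\<in>V. \<Sum>y\<in>V. if E v x \<and> E v y \<and> B x y then 1 else 0)"
        by (intro sum.cong refl) (auto intro: sum.cong)
      finally show ?thesis .
    qed
    have "(\<Sum>v\<in>V. b v) = (\<Sum>v\<in>V. \<Sum>x\<in>V. \<Sum>y\<in>V. if E v x \<and> E v y \<and> B x y then 1 else 0)"
      by (rule sum.cong[OF refl]) (rule bexp)
    also have "\<dots> = (\<Sum>x\<in>V. \<Sum>v\<in>V. \<Sum>y\<in>V. if E v x \<and> E v y \<and> B x y then 1 else 0)"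
      by (rule sum.swap)
    also have "\<dots> = (\<Sum>x\<in>V. \<Sum>y\<in>V. \<Sum>v\<in>V. if E v x \<and> E v y \<and> B x y then 1 else 0)"
      by (rule sum.cong[OF refl], rule sum.swap)
    also have "\<dots> = (\<Sum>x\<in>V. \<Sum>y\<in>V. if B x y then real (card (N x \<inter> N y)) else 0)"
    proof (intro sum.cong refl)
      fix x y assume "x \<in> V" "y \<in> V"
      have e: "N x \<inter> N y = {v\<in>V. E v x \<and> E v y}" unfolding N_def using sym by auto
      show "(\<Sum>v\<in>V. if E v x \<and> E v y \<and> B x y then 1 else 0) = (if B x y then real (card (N x \<inter> N y)) else 0)"
        unfolding e using card_filter_sum[OF fin, of "\<lambda>v. E v x \<and> E v y"] by auto
    qed
    also have "\<dots> \<le> (\<Sum>x\<in>V. \<Sum>y\<in>V. m)"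
      by (intro sum_mono) (auto simp: B_def m0)
    finally have s3: "(\<Sum>v\<in>V. b v) \<le> n^2 * m" by (simp add: n_def power2_eq_square)
    have "(\<Sum>v\<in>V. d v ^ 2 - 8 * b v) \<ge> c^2 * n^3 / 2"
    proof -
      have "(\<Sum>v\<in>V. d v ^ 2 - 8 * b v) = (\<Sum>v\<in>V. d v ^ 2) - 8 * (\<Sum>v\<in>V. b v)"
        by (simp add: sum_subtractf sum_distrib_left)
      moreover have "n^2*m = c^2*n^3/16" by (simp add: m_def power2_eq_square power3_eq_cube)
      ultimately show ?thesis using s2 s3 by linarith
    qed
    then obtain v where vV: "v \<in> V" and v: "d v ^ 2 - 8 * b v \<ge> c^2 * n^2 / 2"
    proof -
      assume h: "\<And>v. v \<in> V \<Longrightarrow> c^2 * n^2 / 2 \<le> d v ^ 2 - 8 * b v \<Longrightarrow> thesis"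
      show thesis
      proof (rule ccontr)
        assume "\<not> thesis"
        then have "\<forall>v\<in>V. d v ^ 2 - 8 * b v < c^2 * n^2 / 2" using h by force
        then have "(\<Sum>v\<in>V. d v ^ 2 - 8 * b v) < (\<Sum>v\<in>V. c^2 * n^2 / 2)"
          using False fin by (intro sum_strict_mono) auto
        then show False using \<open>(\<Sum>v\<in>V. d v ^ 2 - 8 * b v) \<ge> c^2 * n^3 / 2\<close>
          by (simp add: n_def power2_eq_square power3_eq_cube mult_ac)
      qed
    qed

    define Nv where "Nv = N v"
    define k where "k = d v"
    have k0: "k \<ge> 0" unfolding k_def d_def by simp
    have kNv: "k = real (card Nv)" unfolding k_def d_def Nv_def ..
    have b0: "b v \<ge> 0" unfolding b_def bx_def by (intro sum_nonneg) auto
    have "0 \<le> c^2*n^2/2" by simp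
    then have bk: "b v \<le> k^2 / 8" using v unfolding k_def by linarith
    have "(c*n/2)^2 = c^2*n^2/4" by (simp add: power_divide power_mult_distrib)
    then have kk: "(c*n/2)^2 \<le> k^2" using v b0 \<open>0 \<le> c^2*n^2/2\<close> unfolding k_def by linarith
    then have kc: "c*n/2 \<le> k" using k0 by (rule power2_le_imp_le)
    have "c*n/2 > 0" using assms(2) npos by simp
    then have kpos: "k > 0" using kc by linarith
    have bxcard: "bx v x = real (card {y\<in>Nv. B x y})" for x
      unfolding bx_def Nv_def using card_filter_sum[OF finN] by simp
    define X where "X = {x\<in>Nv. bx v x \<le> k/4}"
    have finNv: "finite Nv" unfolding Nv_def by (rule finN)
    have XN: "X \<subseteq> Nv" unfolding X_def by auto
    have "real (card (Nv - X)) * (k/4) = (\<Sum>x\<in>Nv - X. k/4)" by simp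
    also have "\<dots> \<le> (\<Sum>x\<in>Nv - X. bx v x)"
      by (intro sum_mono) (auto simp: X_def)
    also have "\<dots> \<le> (\<Sum>x\<in>Nv. bx v x)"
      by (intro sum_mono2[OF finNv]) (auto simp: bx_def intro: sum_nonneg)
    also have "\<dots> = b v" unfolding b_def Nv_def ..
    finally have "real (card (Nv - X)) * (k/4) \<le> k^2/8" using bk by linarith
    then have "real (card (Nv - X)) \<le> k / 2" using kpos
      by (simp add: power2_eq_square field_simps)
    moreover have "card (Nv - X) = card Nv - card X" using XN finNv by (simp add: card_Diff_subset finite_subset)
    moreover have "card X \<le> card Nv" using XN finNv by (simp add: card_mono)
    ultimately have cX: "real (card X) \<ge> k/2" using kNv by (simp add: of_nat_diff)
    have XV: "X \<subseteq> V" using XN NV unfolding Nv_def by blast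
    show ?thesis
    proof (intro exI[of _ X] conjI XV ballI)
      have "2 powr (-5) * c * n = c * n / 32" by (simp add: powr_minus powr_realpow divide_simps)
      moreover have "c * n \<ge> 0" using assms(2) npos by simp
      ultimately show "2 powr (-5) * c * real (card V) \<le> real (card X)"
        using cX kc unfolding n_def by linarith
    next
      fix x y assume xX: "x \<in> X" and yX: "y \<in> X"
      have xN: "x \<in> Nv" and yN: "y \<in> Nv" using xX yX XN by auto
      have xV: "x \<in> V" and yV: "y \<in> V" using xN yN NV unfolding Nv_def by auto
      have bxx: "bx v x \<le> k/4" and bxy: "bx v y \<le> k/4" using xX yX unfolding X_def by auto
      define Gx where "Gx = {z\<in>Nv. \<not> B x z}"
      define Gy where "Gy = {z\<in>Nv. \<not> B y z}"
      have cGx: "real (card Gx) \<ge> 3*k/4"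
        using card_filter_not[OF finNv, of "B x"] bxx unfolding Gx_def bx_def Nv_def kNv by simp
      have cGy: "real (card Gy) \<ge> 3*k/4"
        using card_filter_not[OF finNv, of "B y"] bxy unfolding Gy_def bx_def Nv_def kNv by simp
      have GN: "Gx \<subseteq> Nv" "Gy \<subseteq> Nv" unfolding Gx_def Gy_def by auto
      have finG: "finite (Gx \<times> Gy)" using GN finNv by (meson finite_SigmaI finite_subset)
      define P where "P = {p\<in>Nv\<times>Nv. B (fst p) (snd p)}"
      have "b v = (\<Sum>x\<in>Nv. \<Sum>y\<in>Nv. if B x y then 1 else 0)" unfolding b_def bx_def Nv_def ..
      also have "\<dots> = (\<Sum>p\<in>Nv\<times>Nv. if B (fst p) (snd p) then 1 else 0)"
        by (simp add: sum.cartesian_product case_prod_beta)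
      also have "\<dots> = real (card P)" unfolding P_def using finNv by (simp add: card_filter_sum)
      finally have bP: "b v = real (card P)" .
      define S where "S = {p\<in>Gx\<times>Gy. \<not> B (fst p) (snd p)}"
      have "real (card S) = real (card (Gx\<times>Gy)) - real (card {p\<in>Gx\<times>Gy. B (fst p) (snd p)})"
        unfolding S_def using card_filter_not[OF finG] card_filter_sum[OF finG] by simp
      moreover have "card {p\<in>Gx\<times>Gy. B (fst p) (snd p)} \<le> card P"
        unfolding P_def using GN finNv by (intro card_mono) auto
      moreover have "real (card (Gx\<times>Gy)) \<ge> (3*k/4) * (3*k/4)"
        unfolding card_cartesian_product of_nat_mult using cGx cGy k0 by (intro mult_mono) auto
      ultimately have "real (card S) \<ge> (3*k/4) * (3*k/4) - k^2/8" using bk bP by linarith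
      moreover have "(3*k/4) * (3*k/4) - k^2/8 = 7/16 * k^2" by (simp add: power2_eq_square)
      ultimately have S7: "real (card S) \<ge> 7/64 * c^2 * n^2"
        using kk \<open>(c*n/2)^2 = c^2*n^2/4\<close> by linarith
      have finS: "finite S" using finG unfolding S_def by simp
      define T where "T = (SIGMA p:S. (N x \<inter> N (fst p)) \<times> (N (fst p) \<inter> N (snd p)) \<times> (N (snd p) \<inter> N y))"
      define f where "f = (\<lambda>(p::'a\<times>'a, a::'a, b::'a, c::'a). [x, a, fst p, b, snd p, c, y])"
      have injf: "inj_on f T" unfolding inj_on_def f_def T_def by (auto simp: prod_eq_iff)
      have fT: "f ` T \<subseteq> walks V E 6 x y"
      proof
        fix l assume "l \<in> f ` T"
        then obtain z w a b' c' where zw: "(z,w) \<in> S" and a: "a \<in> N x \<inter> N z" and b': "b' \<in> N z \<inter> N w"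
          and c': "c' \<in> N w \<inter> N y" and l: "l = [x,a,z,b',w,c',y]"
          unfolding T_def f_def by auto
        have "z \<in> V" "w \<in> V" using zw GN NV unfolding S_def Nv_def by auto
        then show "l \<in> walks V E 6 x y" unfolding l
          using a b' c' xV yV by (intro walk7) (auto simp: N_def intro: sym)
      qed
      have finW: "finite (walks V E 6 x y)"
      proof (rule finite_subset)
        show "walks V E 6 x y \<subseteq> {xs. set xs \<subseteq> V \<and> length xs = 7}" unfolding walks_def by auto
        show "finite {xs. set xs \<subseteq> V \<and> length xs = 7}" using fin by (rule finite_lists_length_eq)
      qed
      have "card T \<le> card (walks V E 6 x y)"
        using card_inj_on_le[OF injf fT finW] .
      moreover have "card T = (\<Sum>p\<in>S. card (N x \<inter> N (fst p)) * card (N (fst p) \<inter> N (snd p)) * card (N (snd p) \<inter> N y))"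
        unfolding T_def using finS finN by (simp add: card_cartesian_product mult.assoc)
      ultimately have W1: "real (card (walks V E 6 x y)) \<ge> (\<Sum>p\<in>S. real (card (N x \<inter> N (fst p))) * real (card (N (fst p) \<inter> N (snd p))) * real (card (N (snd p) \<inter> N y)))"
        by (metis (no_types, lifting) of_nat_le_iff of_nat_mult of_nat_sum sum.cong)
      have "(\<Sum>p\<in>S. m^3) \<le> (\<Sum>p\<in>S. real (card (N x \<inter> N (fst p))) * real (card (N (fst p) \<inter> N (snd p))) * real (card (N (snd p) \<inter> N y)))"
      proof (intro sum_mono cube_le m0)
        fix p assume "p \<in> S"
        then have "\<not> B x (fst p)" "\<not> B (fst p) (snd p)" "\<not> B y (snd p)"
          unfolding S_def Gx_def Gy_def by auto
        then show "m \<le> real (card (N x \<inter> N (fst p)))" "m \<le> real (card (N (fst p) \<inter> N (snd p)))"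
          "m \<le> real (card (N (snd p) \<inter> N y))" unfolding B_def by (auto simp: Int_commute)
      qed
      then have W2: "real (card (walks V E 6 x y)) \<ge> real (card S) * m^3" using W1 by simp
      have L1: "real (card S) * m^3 \<ge> 7/64 * c^2 * n^2 * m^3"
        using S7 m0 by (intro mult_right_mono) auto
      have L2: "7/64 * c^2 * n^2 * m^3 = 7/262144 * (c^8 * n^5)"
        unfolding m_def by (simp add: field_simps eval_nat_numeral)
      have "c^9 \<le> c^8" using c1 assms(2) by (intro power_decreasing) auto
      then have "c^9 * n^5 \<le> c^8 * n^5" using npos by (intro mult_right_mono) auto
      then have L3: "2 powr (-35) * (c^9 * n^5) \<le> 2 powr (-35) * (c^8 * n^5)" by (intro mult_left_mono) auto
      have L4: "2 powr (-35) = (1::real) / 2^35" by (simp add: powr_minus powr_realpow divide_simps)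
      have L5: "0 \<le> c^8 * n^5" using npos by simp
      have L6: "2 powr (-35) * (c^8 * n^5) \<le> 7/262144 * (c^8 * n^5)"
        unfolding L4 using L5 by (simp add: mult.commute)
      have "2 powr (-35) * (c^9 * n^5) \<le> real (card (walks V E 6 x y))"
        using L1 L2 L3 L6 W2 by linarith
      then show "2 powr (-35) * c ^ 9 * real (card V) ^ 5 \<le> real (card (walks V E 6 x y))"
        unfolding n_def by (simp add: mult.assoc)
    qed
  qed
qed
end
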